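(* $(\mathbf{Z}/11\mathbf{Z})\rtimes_4\mathbf{Z}\not\simeq(\mathbf{Z}/11\mathbf{Z})\rtimes_9\mathbf{Z}$.
   Context: For $b\in(\mathbf{Z}/11\mathbf{Z})^*$, $(\mathbf{Z}/11\mathbf{Z})\rtimes_b\mathbf{Z}$ denotes the semidirect product in which the generator $1\in\mathbf{Z}$ acts on $\mathbf{Z}/11\mathbf{Z}$ by multiplication by $b$. *)

theory Defs
  imports "HOL-Algebra.Group" "HOL-Number_Theory.Cong"
begin

text \<open>Elements of Z/nZ are represented by their least nonnegative residues {0..<n}.
  The inverse of a unit b modulo n, as a residue.\<close>
definition res_inv :: "int \<Rightarrow> int \<Rightarrow> int" where
  "res_inv n b = (SOME c. c \<in> {0..<n} \<and> [b * c = 1] (mod n))"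

definition sdp_act :: "int \<Rightarrow> int \<Rightarrow> int \<Rightarrow> int" where
  "sdp_act n b m = (if 0 \<le> m then b ^ nat m else res_inv n b ^ nat (- m)) mod n"

text \<open>The semidirect product (Z/nZ) \<rtimes>_b Z, with (a,m)(a',m') = (a + b^m a', m + m').\<close>
definition sdp :: "int \<Rightarrow> int \<Rightarrow> (int \<times> int) monoid" where
  "sdp n b = \<lparr> carrier = {0..<n} \<times> UNIV,
              monoid.mult = (\<lambda>(a, m) (a', m'). ((a + sdp_act n b m * a') mod n, m + m')),
              monoid.one = (0, 0) \<rparr>"

end

theory Submission
  imports Defs
begin

fun pw :: "('a,'b) monoid_scheme \<Rightarrow> nat \<Rightarrow> 'a \<Rightarrow> 'a" where
  "pw G 0 x = x"
| "pw G (Suc n) x = pw G n x \<otimes>\<^bsub>G\<^esub> x"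

definition PP :: "('a,'b) monoid_scheme \<Rightarrow> bool" where
  "PP G = (\<exists>g\<in>carrier G. \<exists>t\<in>carrier G. pw G 11 t = t \<and> t \<otimes>\<^bsub>G\<^esub> t \<noteq> t
     \<and> g \<otimes>\<^bsub>G\<^esub> t = pw G 3 t \<otimes>\<^bsub>G\<^esub> g
     \<and> (\<forall>y\<in>carrier G. pw G 11 y = y \<or> (\<exists>k. \<exists>s\<in>carrier G. pw G 11 s = s \<and>
        (y = s \<otimes>\<^bsub>G\<^esub> pw G k g \<or>
         pw G 11 (y \<otimes>\<^bsub>G\<^esub> pw G k g) = y \<otimes>\<^bsub>G\<^esub> pw G k g))))"

lemma pw_closed:
  assumes cl: "\<And>x y. x \<in> carrier G \<Longrightarrow> y \<in> carrier G \<Longrightarrow> x \<otimes>\<^bsub>G\<^esub> y \<in> carrier G"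
    and "x \<in> carrier G" shows "pw G n x \<in> carrier G"
  using assms by (induction n) auto

lemma pw_hom:
  assumes "h \<in> hom G H"
    and cl: "\<And>x y. x \<in> carrier G \<Longrightarrow> y \<in> carrier G \<Longrightarrow> x \<otimes>\<^bsub>G\<^esub> y \<in> carrier G"
    and "x \<in> carrier G" shows "h (pw G n x) = pw H n (h x)"
  using assms
proof (induction n)
  case (Suc n)
  have "pw G n x \<in> carrier G" using pw_closed[OF cl] Suc by blast
  then show ?case using Suc by (simp add: hom_mult)
qed simp

lemma PP_transfer:
  assumes "h \<in> iso G H"
    and clG: "\<And>x y. x \<in> carrier G \<Longrightarrow> y \<in> carrier G \<Longrightarrow> x \<otimes>\<^bsub>G\<^esub> y \<in> carrier G"
    and "PP G" shows "PP H"
proof -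
  have hh: "h \<in> hom G H" and bij: "bij_betw h (carrier G) (carrier H)"
    using assms(1) by (auto simp: iso_def)
  have inj: "inj_on h (carrier G)" and surj: "h ` carrier G = carrier H"
    using bij by (auto simp: bij_betw_def)
  have hc: "\<And>x. x \<in> carrier G \<Longrightarrow> h x \<in> carrier H" using surj by blast
  have hm: "\<And>x y. x \<in> carrier G \<Longrightarrow> y \<in> carrier G \<Longrightarrow> h (x \<otimes>\<^bsub>G\<^esub> y) = h x \<otimes>\<^bsub>H\<^esub> h y"
    using hh by (simp add: hom_mult)
  have hp: "\<And>x n. x \<in> carrier G \<Longrightarrow> h (pw G n x) = pw H n (h x)"
    using pw_hom[OF hh clG] by blast
  have pc: "\<And>x n. x \<in> carrier G \<Longrightarrow> pw G n x \<in> carrier G"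
    using pw_closed[OF clG] by blast
  obtain g t where g: "g \<in> carrier G" and t: "t \<in> carrier G" and
    1: "pw G 11 t = t" and 2: "t \<otimes>\<^bsub>G\<^esub> t \<noteq> t" and 3: "g \<otimes>\<^bsub>G\<^esub> t = pw G 3 t \<otimes>\<^bsub>G\<^esub> g"
    and 4: "\<forall>y\<in>carrier G. pw G 11 y = y \<or> (\<exists>k. \<exists>s\<in>carrier G. pw G 11 s = s \<and>
        (y = s \<otimes>\<^bsub>G\<^esub> pw G k g \<or>
         pw G 11 (y \<otimes>\<^bsub>G\<^esub> pw G k g) = y \<otimes>\<^bsub>G\<^esub> pw G k g))"
    using assms(3) unfolding PP_def by blast
  show ?thesis unfolding PP_def
  proof (rule bexI[of _ "h g"], rule bexI[of _ "h t"], intro conjI ballI)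
    show "h g \<in> carrier H" "h t \<in> carrier H" using g t hc by auto
    show "pw H 11 (h t) = h t" using 1 hp t by metis
    show "h t \<otimes>\<^bsub>H\<^esub> h t \<noteq> h t"
    proof
      assume "h t \<otimes>\<^bsub>H\<^esub> h t = h t"
      hence "h (t \<otimes>\<^bsub>G\<^esub> t) = h t" using hm t by simp
      hence "t \<otimes>\<^bsub>G\<^esub> t = t" using inj t clG[OF t t] by (meson inj_onD)
      thus False using 2 by simp
    qed
    show "h g \<otimes>\<^bsub>H\<^esub> h t = pw H 3 (h t) \<otimes>\<^bsub>H\<^esub> h g"
      using 3 hm hp g t pc by metis
    fix y assume "y \<in> carrier H"
    then obtain x where x: "x \<in> carrier G" and y: "y = h x" using surj by blast
    from 4 x consider "pw G 11 x = x" | k s where "s \<in> carrier G" "pw G 11 s = s"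
        "x = s \<otimes>\<^bsub>G\<^esub> pw G k g \<or> pw G 11 (x \<otimes>\<^bsub>G\<^esub> pw G k g) = x \<otimes>\<^bsub>G\<^esub> pw G k g"
      by blast
    then show "pw H 11 y = y \<or> (\<exists>k. \<exists>s\<in>carrier H. pw H 11 s = s \<and>
        (y = s \<otimes>\<^bsub>H\<^esub> pw H k (h g) \<or>
         pw H 11 (y \<otimes>\<^bsub>H\<^esub> pw H k (h g)) = y \<otimes>\<^bsub>H\<^esub> pw H k (h g)))"
    proof cases
      case 1 then show ?thesis using hp x y by metis
    next
      case (2 k s)
      have "h s \<in> carrier H" using 2 hc by auto
      moreover have "pw H 11 (h s) = h s" using 2 hp by metis
      moreover have "y = h s \<otimes>\<^bsub>H\<^esub> pw H k (h g) \<or>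
         pw H 11 (y \<otimes>\<^bsub>H\<^esub> pw H k (h g)) = y \<otimes>\<^bsub>H\<^esub> pw H k (h g)"
      proof -
        have e1: "h (s \<otimes>\<^bsub>G\<^esub> pw G k g) = h s \<otimes>\<^bsub>H\<^esub> pw H k (h g)"
          using hm hp 2 g pc by metis
        have e2: "h (pw G 11 (x \<otimes>\<^bsub>G\<^esub> pw G k g)) = pw H 11 (y \<otimes>\<^bsub>H\<^esub> pw H k (h g))"
          using hm hp x g pc clG y by metis
        have e3: "h (x \<otimes>\<^bsub>G\<^esub> pw G k g) = y \<otimes>\<^bsub>H\<^esub> pw H k (h g)"
          using hm hp x g pc y by metis
        from 2(3) show ?thesis using e1 e2 e3 y by metis
      qed
      ultimately show ?thesis by blast
    qed
  qed
qed

lemma sdp_mult: "(a, m) \<otimes>\<^bsub>sdp n b\<^esub> (a', m') = ((a + sdp_act n b m * a') mod n, m + m')"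
  by (simp add: sdp_def)

lemma sdp_carrier: "carrier (sdp n b) = {0..<n} \<times> UNIV"
  by (simp add: sdp_def)

lemma sdp_closed: "n > 0 \<Longrightarrow> x \<in> carrier (sdp n b) \<Longrightarrow> y \<in> carrier (sdp n b) \<Longrightarrow>
   x \<otimes>\<^bsub>sdp n b\<^esub> y \<in> carrier (sdp n b)"
  by (cases x; cases y) (simp add: sdp_mult sdp_carrier)

lemma act0: "n > 1 \<Longrightarrow> sdp_act n b 0 = 1"
  by (simp add: sdp_act_def)

lemma pw_snd: "snd (pw (sdp n b) k x) = int (Suc k) * snd x"
  by (induction k) (auto simp: sdp_def split: prod.splits simp: algebra_simps)

lemma pw_g4: "pw (sdp 11 4) k (0, 1) = (0, int (Suc k))"
  by (induction k) (simp_all add: sdp_mult)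

lemma pw_t: "a \<in> {0..<11} \<Longrightarrow> pw (sdp 11 b) k (a, 0) = ((int (Suc k) * a) mod 11, 0)"
proof (induction k)
  case 0 then show ?case by simp
next
  case (Suc k)
  then show ?case by (simp add: sdp_mult act0 mod_add_right_eq algebra_simps)
qed

lemma twelve: "0 \<le> a \<Longrightarrow> a < 11 \<Longrightarrow> (12 * a) mod 11 = (a::int)"
proof -
  assume "0 \<le> a" "a < 11"
  have "(12 * a) mod 11 = (a + a * 11) mod 11" by (simp add: algebra_simps)
  also have "\<dots> = a mod 11" by (metis mod_mult_self1)
  finally show ?thesis using \<open>0 \<le> a\<close> \<open>a < 11\<close> by simp
qed

lemma PP4: "PP (sdp 11 4)"
  unfolding PP_def
proof (rule bexI[of _ "(0,1)"], rule bexI[of _ "(1,0)"], intro conjI ballI)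
  show "(0::int, 1::int) \<in> carrier (sdp 11 4)" "(1::int, 0::int) \<in> carrier (sdp 11 4)"
    by (auto simp: sdp_carrier)
  show "pw (sdp 11 4) 11 (1, 0) = (1, 0)" by (simp add: pw_t)
  show "(1, 0) \<otimes>\<^bsub>sdp 11 4\<^esub> (1, 0) \<noteq> (1::int, 0::int)" by (simp add: sdp_mult act0)
  show "(0, 1) \<otimes>\<^bsub>sdp 11 4\<^esub> (1, 0) = pw (sdp 11 4) 3 (1, 0) \<otimes>\<^bsub>sdp 11 4\<^esub> (0::int, 1::int)"
    by (simp add: pw_t sdp_mult act0 sdp_act_def)
  fix y assume "y \<in> carrier (sdp 11 4)"
  then obtain a m where y: "y = (a, m)" and a: "a \<in> {0..<11}" by (auto simp: sdp_carrier)
  have sc: "(a, 0) \<in> carrier (sdp 11 4)" using a by (simp add: sdp_carrier)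
  have sT: "pw (sdp 11 4) 11 (a, 0) = (a, 0)" using a by (simp add: pw_t twelve)
  consider "m = 0" | "m \<ge> 1" | "m < 0" by linarith
  then show "pw (sdp 11 4) 11 y = y \<or> (\<exists>k. \<exists>s\<in>carrier (sdp 11 4). pw (sdp 11 4) 11 s = s \<and>
        (y = s \<otimes>\<^bsub>sdp 11 4\<^esub> pw (sdp 11 4) k (0, 1) \<or>
         pw (sdp 11 4) 11 (y \<otimes>\<^bsub>sdp 11 4\<^esub> pw (sdp 11 4) k (0, 1)) = y \<otimes>\<^bsub>sdp 11 4\<^esub> pw (sdp 11 4) k (0, 1)))"
  proof cases
    case 1 then show ?thesis using sT y by simp
  next
    case 2
    have "y = (a, 0) \<otimes>\<^bsub>sdp 11 4\<^esub> pw (sdp 11 4) (nat m - 1) (0, 1)"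
      using 2 a y by (simp add: pw_g4 sdp_mult act0)
    then show ?thesis using sc sT by blast
  next
    case 3
    have e: "y \<otimes>\<^bsub>sdp 11 4\<^esub> pw (sdp 11 4) (nat (-m) - 1) (0, 1) = (a, 0)"
      using 3 a y by (simp add: pw_g4 sdp_mult)
    then show ?thesis using sc sT e by metis
  qed
qed

lemma res_inv_9: "res_inv 11 9 = 5"
proof -
  have "\<And>c. c \<in> {0..<11} \<and> [9 * c = 1] (mod 11) \<Longrightarrow> c = (5::int)"
  proof -
    fix c :: int assume h: "c \<in> {0..<11} \<and> [9 * c = 1] (mod 11)"
    hence h1: "(9 * c) mod 11 = 1" and h2: "0 \<le> c" "c < 11" by (auto simp: cong_def)
    have "(5 * (9 * c)) mod 11 = (5 * ((9 * c) mod 11)) mod 11" by (simp add: mod_mult_right_eq)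
    also have "\<dots> = 5" using h1 by simp
    finally have "(c + (4*c) * 11) mod 11 = 5" by (simp add: algebra_simps)
    hence "c mod 11 = 5" by (metis mod_mult_self1)
    thus "c = 5" using h2 by simp
  qed
  moreover have "(5::int) \<in> {0..<11} \<and> [9 * 5 = (1::int)] (mod 11)" by (simp add: cong_def)
  ultimately show ?thesis unfolding res_inv_def by (metis (mono_tags, lifting) someI_ex)
qed

lemma not_PP9: "\<not> PP (sdp 11 9)"
proof
  assume "PP (sdp 11 9)"
  then obtain g t where g: "g \<in> carrier (sdp 11 9)" and t: "t \<in> carrier (sdp 11 9)" and
    1: "pw (sdp 11 9) 11 t = t" and 2: "t \<otimes>\<^bsub>sdp 11 9\<^esub> t \<noteq> t"
    and 3: "g \<otimes>\<^bsub>sdp 11 9\<^esub> t = pw (sdp 11 9) 3 t \<otimes>\<^bsub>sdp 11 9\<^esub> g"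
    and 4: "\<forall>y\<in>carrier (sdp 11 9). pw (sdp 11 9) 11 y = y \<or> (\<exists>k. \<exists>s\<in>carrier (sdp 11 9). pw (sdp 11 9) 11 s = s \<and>
        (y = s \<otimes>\<^bsub>sdp 11 9\<^esub> pw (sdp 11 9) k g \<or>
         pw (sdp 11 9) 11 (y \<otimes>\<^bsub>sdp 11 9\<^esub> pw (sdp 11 9) k g) = y \<otimes>\<^bsub>sdp 11 9\<^esub> pw (sdp 11 9) k g))"
    unfolding PP_def by blast
  obtain a m where gam: "g = (a, m)" and a: "a \<in> {0..<11}" using g by (auto simp: sdp_carrier)
  obtain c e where tce: "t = (c, e)" and c: "c \<in> {0..<11}" using t by (auto simp: sdp_carrier)
  have "snd (pw (sdp 11 9) 11 t) = snd t" using 1 by simp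
  hence "e = 0" using pw_snd[of 11 9 11 t] tce by simp
  hence tc: "t = (c, 0)" using tce by simp
  have c0: "c \<noteq> 0"
  proof
    assume "c = 0" thus False using 2 tc by (simp add: sdp_mult act0)
  qed
  have "fst (g \<otimes>\<^bsub>sdp 11 9\<^esub> t) = fst (pw (sdp 11 9) 3 t \<otimes>\<^bsub>sdp 11 9\<^esub> g)" using 3 by simp
  hence eq: "(a + sdp_act 11 9 m * c) mod 11 = ((4 * c) mod 11 + a) mod 11"
    using gam tc c by (simp add: pw_t sdp_mult act0)
  have y1: "(0::int, 1::int) \<in> carrier (sdp 11 9)" by (simp add: sdp_carrier)
  have nT: "pw (sdp 11 9) 11 (0, 1) \<noteq> (0::int, 1::int)"
  proof
    assume "pw (sdp 11 9) 11 (0, 1) = (0::int, 1::int)"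
    hence "snd (pw (sdp 11 9) 11 (0::int, 1::int)) = 1" by simp
    thus False using pw_snd[of 11 9 11 "(0::int, 1::int)"] by simp
  qed
  have m1: "m = 1 \<or> m = -1"
  proof -
    from 4 y1 nT obtain k s where s: "pw (sdp 11 9) 11 s = s"
      and d: "(0, 1) = s \<otimes>\<^bsub>sdp 11 9\<^esub> pw (sdp 11 9) k g \<or>
         pw (sdp 11 9) 11 ((0, 1) \<otimes>\<^bsub>sdp 11 9\<^esub> pw (sdp 11 9) k g) = (0::int, 1::int) \<otimes>\<^bsub>sdp 11 9\<^esub> pw (sdp 11 9) k g"
      by blast
    have ss: "snd s = 0" using pw_snd[of 11 9 11 s] s by simp
    have sk: "snd (pw (sdp 11 9) k g) = int (Suc k) * m" using pw_snd gam by simp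
    from d show ?thesis
    proof
      assume "(0, 1) = s \<otimes>\<^bsub>sdp 11 9\<^esub> pw (sdp 11 9) k g"
      hence "1 = snd s + snd (pw (sdp 11 9) k g)"
        by (cases s; cases "pw (sdp 11 9) k g") (simp add: sdp_mult)
      hence "int (Suc k) * m = 1" using ss sk by simp
      thus ?thesis using zmult_eq_1_iff by (metis of_nat_less_0_iff not_one_less_zero)
    next
      let ?z = "(0::int, 1::int) \<otimes>\<^bsub>sdp 11 9\<^esub> pw (sdp 11 9) k g"
      assume "pw (sdp 11 9) 11 ?z = ?z"
      hence "snd ?z = 0" using pw_snd[of 11 9 11 ?z] by simp
      hence "1 + int (Suc k) * m = 0" using sk
        by (cases "pw (sdp 11 9) k g") (simp add: sdp_mult)
      hence "int (Suc k) * (-m) = 1" by simp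
      hence "int (Suc k) = 1 \<and> -m = 1 \<or> int (Suc k) = -1 \<and> -m = -1" using zmult_eq_1_iff by blast
      hence "-m = 1" by auto
      thus ?thesis by simp
    qed
  qed
  have cpos: "0 < c" "c < 11" using c c0 by auto
  have key: "\<not> (11::int) dvd c" using cpos zdvd_imp_le by fastforce
  have eq': "(a + sdp_act 11 9 m * c) mod 11 = (a + 4 * c) mod 11"
    using eq by (metis mod_add_right_eq add.commute)
  from m1 show False
  proof
    assume "m = 1"
    hence "(a + 9 * c) mod 11 = (a + 4 * c) mod 11" using eq' by (simp add: sdp_act_def)
    hence "11 dvd ((a + 9 * c) - (a + 4 * c))" by (simp add: mod_eq_dvd_iff)
    hence "(11::int) dvd (5 * c)" by simp
    hence "(11::int) dvd (9 * (5 * c))" by (rule dvd_mult)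
    hence "(11::int) dvd (c + 11 * (4 * c))" by (simp add: algebra_simps)
    hence "(11::int) dvd c" by (metis dvd_add_left_iff dvd_triv_left)
    thus False using key by simp
  next
    assume "m = -1"
    hence "(a + 5 * c) mod 11 = (a + 4 * c) mod 11" using eq' by (simp add: sdp_act_def res_inv_9)
    hence "11 dvd ((a + 5 * c) - (a + 4 * c))" by (simp add: mod_eq_dvd_iff)
    hence "(11::int) dvd c" by simp
    thus False using key by simp
  qed
qed

theorem lemma4p3:
  shows "\<not> (sdp 11 4 \<cong> sdp 11 9)"
proof
  assume "sdp 11 4 \<cong> sdp 11 9"
  then obtain h where "h \<in> iso (sdp 11 4) (sdp 11 9)" by (auto simp: is_iso_def)
  moreover have "\<And>x y. x \<in> carrier (sdp 11 4) \<Longrightarrow> y \<in> carrier (sdp 11 4) \<Longrightarrow>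
      x \<otimes>\<^bsub>sdp 11 4\<^esub> y \<in> carrier (sdp 11 4)" using sdp_closed by simp
  ultimately have "PP (sdp 11 9)" using PP_transfer PP4 by blast
  thus False using not_PP9 by simp
qed

end
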